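(* For $g\ge0$, let $N_2(g)$ denote the number of gapsets of genus $g$ and depth at most $2$. Then for all $g\ge 2$, $$N_2(g)=N_2(g-1)+N_2(g-2).$$
   Context: A gapset is a finite set $G \subset \mathbb{N}_+=\{1,2,3,\dots\}$ such that for all $z \in G$, whenever $z=x+y$ with $x,y\in\mathbb{N}_+$, we have $x\in G$ or $y\in G$. The multiplicity of $G$ is the least $m\ge 1$ with $m\notin G$; its conductor is $c=\max G+1$ ($c=0$ if $G=\emptyset$); its genus is $|G|$; its depth is $\lceil c/m\rceil$. *)

theory Defs
  imports Main
begin

definition gapset :: "nat set \<Rightarrow> bool" where
  "gapset G \<longleftrightarrow> finite G \<and> 0 \<notin> G \<and>
     (\<forall>z\<in>G. \<forall>x y. x \<ge> 1 \<and> y \<ge> 1 \<and> z = x + y \<longrightarrow> x \<in> G \<or> y \<in> G)"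

definition multiplicity :: "nat set \<Rightarrow> nat" where
  "multiplicity G = (LEAST m. m \<ge> 1 \<and> m \<notin> G)"

definition conductor :: "nat set \<Rightarrow> nat" where
  "conductor G = (if G = {} then 0 else Max G + 1)"

definition genus :: "nat set \<Rightarrow> nat" where
  "genus G = card G"

(* depth = ceiling (c / m), computed with nat division *)
definition depth :: "nat set \<Rightarrow> nat" where
  "depth G = (conductor G + multiplicity G - 1) div multiplicity G"

definition N2 :: "nat \<Rightarrow> nat" where
  "N2 g = card {G. gapset G \<and> genus G = g \<and> depth G \<le> 2}"

end

theory Submission
  imports Defs
begin

definition SS :: "nat \<Rightarrow> nat \<Rightarrow> nat set set" where
  "SS m g = {G. {1..<m} \<subseteq> G \<and> m \<notin> G \<and> G \<subseteq> {1..<2*m} \<and> card G = g}"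

lemma char1:
  assumes "gapset G" "depth G \<le> 2"
  shows "\<exists>m\<ge>1. {1..<m} \<subseteq> G \<and> m \<notin> G \<and> G \<subseteq> {1..<2*m}"
proof -
  have fin: "finite G" and z: "0 \<notin> G" using assms(1) unfolding gapset_def by auto
  define m where "m = multiplicity G"
  have ex: "\<exists>k. k \<ge> 1 \<and> k \<notin> G"
  proof -
    have "Max (insert 0 G) + 1 \<notin> G"
    proof
      assume "Max (insert 0 G) + 1 \<in> G"
      then have "Max (insert 0 G) + 1 \<le> Max (insert 0 G)" using fin by simp
      then show False by simp
    qed
    then show ?thesis by (intro exI[of _ "Max (insert 0 G) + 1"]) simp
  qed
  have m1: "m \<ge> 1" "m \<notin> G" using LeastI_ex[OF ex] unfolding m_def multiplicity_def by auto
  have low: "{1..<m} \<subseteq> G"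
  proof
    fix k assume "k \<in> {1..<m}"
    then show "k \<in> G" using not_less_Least[of k "\<lambda>m. m \<ge> 1 \<and> m \<notin> G"]
      unfolding m_def multiplicity_def by auto
  qed
  have "(conductor G + m - 1) div m \<le> 2" using assms(2) unfolding depth_def m_def by simp
  then have "conductor G + m - 1 < 3 * m" using m1
  proof -
    let ?x = "conductor G + m - 1"
    have "?x = m * (?x div m) + ?x mod m" by simp
    moreover have "?x mod m < m" using m1 by simp
    moreover have "m * (?x div m) \<le> m * 2" using `?x div m \<le> 2` by simp
    ultimately show ?thesis by linarith
  qed
  then have c: "conductor G \<le> 2 * m" by linarith
  have up: "G \<subseteq> {1..<2*m}"
  proof
    fix x assume x: "x \<in> G"
    then have "G \<noteq> {}" by auto
    then have "x \<le> Max G" using fin x by simp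
    then have "x < 2*m" using c `G \<noteq> {}` unfolding conductor_def by simp
    moreover have "x \<ge> 1" using z x by (cases x) auto
    ultimately show "x \<in> {1..<2*m}" by simp
  qed
  show ?thesis using m1 low up by blast
qed

lemma char2:
  assumes "m \<ge> 1" "{1..<m} \<subseteq> G" "m \<notin> G" "G \<subseteq> {1..<2*m}"
  shows "gapset G \<and> depth G \<le> 2"
proof -
  have fin: "finite G" using assms(4) finite_subset by blast
  have gs: "gapset G" unfolding gapset_def
  proof (intro conjI ballI allI impI)
    show "finite G" by fact
    show "0 \<notin> G" using assms(4) by auto
    fix z x y assume "z \<in> G" "1 \<le> x \<and> 1 \<le> y \<and> z = x + y"
    then show "x \<in> G \<or> y \<in> G"
    proof (cases "x < m")
      case True then show ?thesis using assms(2) `1 \<le> x \<and> 1 \<le> y \<and> z = x + y` by auto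
    next
      case False
      show ?thesis
      proof (cases "y < m")
        case True then show ?thesis using assms(2) `1 \<le> x \<and> 1 \<le> y \<and> z = x + y` by auto
      next
        case F2: False
        have "z < 2*m" using assms(4) `z \<in> G` by auto
        then show ?thesis using False F2 `1 \<le> x \<and> 1 \<le> y \<and> z = x + y` by linarith
      qed
    qed
  qed
  have mu: "multiplicity G = m" unfolding multiplicity_def
  proof (rule Least_equality)
    show "1 \<le> m \<and> m \<notin> G" using assms by auto
    fix y assume "1 \<le> y \<and> y \<notin> G" then show "m \<le> y" using assms(2) by (meson atLeastLessThan_iff not_le subsetD)
  qed
  have c: "conductor G \<le> 2*m"
  proof (cases "G = {}")
    case True then show ?thesis unfolding conductor_def by simp
  next
    case False
    then have "Max G \<in> G" using fin by simp
    then have "Max G < 2*m" using assms(4) by auto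
    then show ?thesis using False unfolding conductor_def by simp
  qed
  have "(conductor G + m - 1) div m \<le> (3*m - 1) div m" using c by (intro div_le_mono) simp
  also have "\<dots> \<le> 2" using assms(1)
  proof -
    have "3*m - 1 < 3 * m" using assms(1) by simp
    then have "(3*m-1) div m < 3" by (simp add: less_mult_imp_div_less)
    then show ?thesis by simp
  qed
  finally show ?thesis using gs mu unfolding depth_def by simp
qed

lemma D_eq: "{G. gapset G \<and> genus G = g \<and> depth G \<le> 2} = (\<Union>m\<in>{1..g+1}. SS m g)"
proof (intro equalityI subsetI)
  fix G assume "G \<in> {G. gapset G \<and> genus G = g \<and> depth G \<le> 2}"
  then have G: "gapset G" "card G = g" "depth G \<le> 2" unfolding genus_def by auto
  obtain m where m: "m \<ge> 1" "{1..<m} \<subseteq> G" "m \<notin> G" "G \<subseteq> {1..<2*m}"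
    using char1[OF G(1,3)] by blast
  have "finite G" using G(1) unfolding gapset_def by auto
  then have "card {1..<m} \<le> card G" using m(2) card_mono by blast
  then have "m \<le> g + 1" using G(2) by simp
  then show "G \<in> (\<Union>m\<in>{1..g+1}. SS m g)" using m G(2) unfolding SS_def by auto
next
  fix G assume "G \<in> (\<Union>m\<in>{1..g+1}. SS m g)"
  then obtain m where m: "m \<ge> 1" "{1..<m} \<subseteq> G" "m \<notin> G" "G \<subseteq> {1..<2*m}" "card G = g"
    unfolding SS_def by auto
  then show "G \<in> {G. gapset G \<and> genus G = g \<and> depth G \<le> 2}"
    using char2[OF m(1-4)] unfolding genus_def by auto
qed

lemma SS_fin: "finite (SS m g)"
proof -
  have "SS m g \<subseteq> Pow {1..<2*m}" unfolding SS_def by auto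
  then show ?thesis by (rule finite_subset) simp
qed

lemma SS_disj: "m \<noteq> m' \<Longrightarrow> m \<ge> 1 \<Longrightarrow> m' \<ge> 1 \<Longrightarrow> SS m g \<inter> SS m' g = {}"
  unfolding SS_def
  by (auto; metis atLeastLessThan_iff linorder_neqE_nat subsetD)

lemma card_SS:
  assumes "m \<ge> 1" and True: "m - 1 \<le> g"
  shows "card (SS m g) = (m-1) choose (g-(m-1))"
proof -
  let ?B = "{A. A \<subseteq> {m<..<2*m} \<and> card A = g-(m-1)}"
  have inj: "inj_on (\<lambda>A. A \<union> {1..<m}) ?B"
  proof (rule inj_onI)
    fix A A' assume "A \<in> ?B" "A' \<in> ?B" "A \<union> {1..<m} = A' \<union> {1..<m}"
    then show "A = A'" by (auto; metis UnCI UnE atLeastLessThan_iff greaterThanLessThan_iff less_le_not_le subsetD)+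
  qed
  have img: "(\<lambda>A. A \<union> {1..<m}) ` ?B = SS m g"
  proof (intro equalityI subsetI)
    fix G assume "G \<in> (\<lambda>A. A \<union> {1..<m}) ` ?B"
    then obtain A where A: "A \<subseteq> {m<..<2*m}" "card A = g-(m-1)" "G = A \<union> {1..<m}" by auto
    have "finite A" using A(1) finite_subset by blast
    have "A \<inter> {1..<m} = {}" using A(1) by auto
    then have "card G = card A + (m - 1)" using A(3) card_Un_disjoint[OF `finite A`, of "{1..<m}"] by simp
    then have "card G = g" using A(2) True by simp
    then show "G \<in> SS m g" unfolding SS_def using A assms by auto
  next
    fix G assume G: "G \<in> SS m g"
    let ?A = "G - {1..<m}"
    have GG: "{1..<m} \<subseteq> G" "m \<notin> G" "G \<subseteq> {1..<2*m}" "card G = g" using G unfolding SS_def by auto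
    have "finite G" using GG(3) finite_subset by blast
    have s: "?A \<subseteq> {m<..<2*m}"
    proof
      fix x assume "x \<in> ?A"
      then show "x \<in> {m<..<2*m}" using GG(2,3) by (cases "x = m") auto
    qed
    have "card ?A = g - (m-1)" using card_Diff_subset[OF _ GG(1)] GG(4) by simp
    moreover have "G = ?A \<union> {1..<m}" using GG(1) by auto
    ultimately show "G \<in> (\<lambda>A. A \<union> {1..<m}) ` ?B" using s by blast
  qed
  have "card (SS m g) = card ?B" using card_image[OF inj] img by simp
  also have "\<dots> = card {m<..<2*m} choose (g-(m-1))" by (rule n_subsets) simp
  also have "card {m<..<2*m} = m - 1" by simp
  finally show ?thesis .
qed

definition F :: "nat \<Rightarrow> nat" where "F g = (\<Sum>k\<le>g. k choose (g-k))"

lemma N2_F: "N2 g = F g"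
proof -
  have "N2 g = card (\<Union>m\<in>{1..g+1}. SS m g)" unfolding N2_def D_eq ..
  also have "\<dots> = (\<Sum>m\<in>{1..g+1}. card (SS m g))"
    by (rule card_UN_disjoint) (auto simp: SS_fin SS_disj)
  also have "\<dots> = (\<Sum>m\<in>{Suc 0..Suc g}. (m-1) choose (g-(m-1)))"
    by (intro sum.cong) (auto simp: card_SS)
  also have "\<dots> = (\<Sum>k\<in>{0..g}. k choose (g-k))"
    by (subst sum.shift_bounds_cl_Suc_ivl) simp
  finally show ?thesis unfolding F_def by (simp add: atLeast0AtMost)
qed

lemma F_rec: "F (Suc (Suc n)) = F (Suc n) + F n"
proof -
  have a: "F (Suc (Suc n)) = (\<Sum>k\<le>Suc n. Suc k choose (Suc n - k))"
    unfolding F_def by (subst sum.atMost_Suc_shift) simp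
  also have "\<dots> = (\<Sum>k\<le>n. Suc k choose (Suc (n - k))) + 1"
    by (simp add: Suc_diff_le)
  also have "(\<Sum>k\<le>n. Suc k choose (Suc (n - k))) = (\<Sum>k\<le>n. k choose (n - k)) + (\<Sum>k\<le>n. k choose (Suc (n - k)))"
    by (simp add: sum.distrib)
  finally have 1: "F (Suc (Suc n)) = F n + (\<Sum>k\<le>n. k choose (Suc (n - k))) + 1" unfolding F_def by simp
  have "F (Suc n) = (\<Sum>k\<le>n. k choose (Suc n - k)) + 1" unfolding F_def by simp
  also have "(\<Sum>k\<le>n. k choose (Suc n - k)) = (\<Sum>k\<le>n. k choose (Suc (n - k)))"
    by (intro sum.cong) (auto simp: Suc_diff_le)
  finally show ?thesis using 1 by simp
qed

theorem mainTheorem10: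
  fixes g :: nat
  assumes "g \<ge> 2"
  shows "N2 g = N2 (g - 1) + N2 (g - 2)"
proof -
  obtain n where n: "g = Suc (Suc n)" using assms by (metis add_2_eq_Suc le_Suc_ex)
  show ?thesis unfolding N2_F n using F_rec by simp
qed

end
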